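(* Let $f(x)$ be an irreducible nonconstant polynomial in $\mathbb{Z}[x]$. Let $b(x) \in \mathbb{Z}[x]$ be an irreducible polynomial, not associate to $f(x)$ in $\mathbb{Z}[x]$, such that there exists an integer $r_b \geq 2$ with $b(x) \mid f(x^{r_b})$ in $\mathbb{Z}[x]$. Then for every $k \in \mathbb{N}$ and every finite sequence $\sigma = (\sigma_1, \ldots, \sigma_k)$ of natural numbers greater than one with $\prod_{i=1}^k \sigma_i = r_b$, there exists a splitting sequence $F = (f_n(x))_{n \in \mathbb{N}_0}$ of $f(x)$ whose exponent sequence begins with $\sigma_1, \ldots, \sigma_k$ and such that $f_k(x) = b(x)$.
   Context: Let $f(x)$ be an irreducible polynomial in $\mathbb{Z}[x]$ and let $(e_n)_{n \in \mathbb{N}}$ be a sequence of positive integers (the exponent sequence; only finitely many of its terms may be specified, in which case only the corresponding finitely many terms of the sequence below matter). A splitting sequence of $f(x)$ with this exponent sequence is a sequence $F = (f_n(x))_{n \in \mathbb{N}_0}$ of irreducible polynomials in $\mathbb{Z}[x]$ with $f_0(x) = f(x)$ and, for each $k \geq 1$, $f_k(x)$ an (arbitrarily chosen) irreducible divisor in $\mathbb{Z}[x]$ of $f_{k-1}(x^{e_k})$. *)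

theory Defs
  imports "HOL-Computational_Algebra.Computational_Algebra"
begin

definition splitting_seq_upto ::
  "int poly \<Rightarrow> (nat \<Rightarrow> nat) \<Rightarrow> nat \<Rightarrow> (nat \<Rightarrow> int poly) \<Rightarrow> bool" where
  "splitting_seq_upto f e k F \<longleftrightarrow>
     F 0 = f \<and>
     (\<forall>j\<in>{1..k}. irreducible (F j) \<and> F j dvd pcompose (F (j - 1)) (monom 1 (e j)))"

end

theory Submission
  imports Defs
begin

lemma pcompose_dvd_mono:
  fixes g h q :: "int poly"
  assumes "g dvd h" shows "pcompose g q dvd pcompose h q"
proof -
  obtain c where "h = g * c" using assms by blast
  then show ?thesis by (simp add: pcompose_mult)
qed

lemma pcompose_prod_mset:
  fixes P :: "int poly multiset"
  shows "pcompose (prod_mset P) q = prod_mset (image_mset (\<lambda>p. pcompose p q) P)"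
  by (induction P) (simp_all add: pcompose_1 pcompose_mult)

lemma key:
  fixes g b q :: "int poly"
  assumes "irreducible b" "g \<noteq> 0" "b dvd pcompose g q"
  shows "\<exists>p. irreducible p \<and> p dvd g \<and> b dvd pcompose p q"
proof -
  have pb: "prime_elem b" using assms(1) by (simp add: prime_elem_iff_irreducible)
  have "normalize (prod_mset (prime_factorization g)) = normalize g"
    using prod_mset_prime_factorization_weak[OF assms(2)] .
  then have "g dvd prod_mset (prime_factorization g)"
    by (metis dvd_normalize_iff normalize_dvd_iff dvd_refl)
  then have "pcompose g q dvd pcompose (prod_mset (prime_factorization g)) q" by (rule pcompose_dvd_mono)
  then have "b dvd pcompose (prod_mset (prime_factorization g)) q"
    using assms(3) dvd_trans by metis
  then have "b dvd prod_mset (image_mset (\<lambda>p. pcompose p q) (prime_factorization g))"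
    by (simp add: pcompose_prod_mset)
  then obtain a where a: "a \<in># image_mset (\<lambda>p. pcompose p q) (prime_factorization g)" "b dvd a"
    using prime_elem_dvd_prod_msetE[OF pb] by metis
  then obtain p where p: "p \<in># prime_factorization g" "a = pcompose p q" by auto
  then have "prime p" "p dvd g" using in_prime_factors_iff by auto
  then show ?thesis using p a prime_elem_iff_irreducible by (metis prime_def)
qed

lemma pcompose_pow_left: "pcompose (p ^ n) q = (pcompose p q) ^ n"
  by (induction n) (simp_all add: pcompose_1 pcompose_mult)

lemma monom_pow_comp:
  "pcompose (pcompose f (monom (1::int) a)) (monom 1 c) = pcompose f (monom 1 (a * c))"
proof -
  have "pcompose (monom (1::int) a) (monom 1 c) = monom 1 (a * c)"
    by (simp add: monom_altdef pcompose_pow_left pcompose_pCons power_mult[symmetric] mult.commute)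
  then show ?thesis by (simp flip: pcompose_assoc)
qed

lemma chain:
  fixes f :: "int poly"
  assumes "f \<noteq> 0"
  shows "k \<ge> 1 \<Longrightarrow> irreducible b \<Longrightarrow> b dvd pcompose f (monom 1 (\<Prod>i=1..k. \<sigma> i)) \<Longrightarrow>
    (\<forall>i\<in>{1..k}. \<sigma> i > 0) \<Longrightarrow> (\<exists>F. splitting_seq_upto f \<sigma> k F \<and> F k = b)"
proof (induction k arbitrary: b rule: nat_induct_at_least)
  case base
  show ?case
    by (rule exI[of _ "\<lambda>j. if j = 0 then f else b"]) (use base in \<open>auto simp: splitting_seq_upto_def\<close>)
next
  case (Suc k)
  let ?g = "pcompose f (monom 1 (\<Prod>i=1..k. \<sigma> i))"
  have pr: "(\<Prod>i=1..Suc k. \<sigma> i) = (\<Prod>i=1..k. \<sigma> i) * \<sigma> (Suc k)"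
    by (simp add: prod.nat_ivl_Suc')
  have "b dvd pcompose ?g (monom 1 (\<sigma> (Suc k)))"
    using Suc.prems(2) by (simp add: pr monom_pow_comp)
  moreover have "?g \<noteq> 0"
  proof -
    have "(\<Prod>i=1..k. \<sigma> i) > 0" using Suc.prems(3) by (simp add: prod_pos)
    then have "degree (monom (1::int) (\<Prod>i=1..k. \<sigma> i)) > 0" by (simp add: degree_monom_eq)
    then show ?thesis using assms by (simp add: pcompose_eq_0_iff)
  qed
  ultimately obtain p where p: "irreducible p" "p dvd ?g" "b dvd pcompose p (monom 1 (\<sigma> (Suc k)))"
    using key Suc.prems(1) by blast
  obtain F where F: "splitting_seq_upto f \<sigma> k F" "F k = p"
    using Suc.IH[OF p(1) p(2)] Suc.prems(3) by auto
  show ?case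
  proof (rule exI[of _ "F(Suc k := b)"])
    show "splitting_seq_upto f \<sigma> (Suc k) (F(Suc k := b)) \<and> (F(Suc k := b)) (Suc k) = b"
      using F Suc.prems(1) p(3) Suc.hyps unfolding splitting_seq_upto_def
      by (auto simp: le_Suc_eq)
  qed
qed

theorem lemma3p5:
  fixes f b :: "int poly" and r :: nat
  assumes "irreducible f" and "degree f > 0"
    and "irreducible b" and "\<not> (b dvd f \<and> f dvd b)"
    and "r \<ge> 2" and "b dvd pcompose f (monom 1 r)"
  shows "\<forall>(k::nat) (\<sigma>::nat \<Rightarrow> nat).
           (\<forall>i\<in>{1..k}. \<sigma> i > 1) \<and> (\<Prod>i=1..k. \<sigma> i) = r \<longrightarrow>
           (\<exists>F. splitting_seq_upto f \<sigma> k F \<and> F k = b)"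
proof (intro allI impI)
  fix k and \<sigma> :: "nat \<Rightarrow> nat"
  assume h: "(\<forall>i\<in>{1..k}. \<sigma> i > 1) \<and> (\<Prod>i=1..k. \<sigma> i) = r"
  have "k \<ge> 1"
  proof (rule ccontr)
    assume "\<not> k \<ge> 1" then have "k = 0" by simp
    then show False using h assms(5) by simp
  qed
  moreover have "f \<noteq> 0" using assms(2) by auto
  moreover have "\<forall>i\<in>{1..k}. \<sigma> i > 0" using h by auto
  ultimately show "\<exists>F. splitting_seq_upto f \<sigma> k F \<and> F k = b"
    using chain[of f k b \<sigma>] h assms(3,6) by blast
qed

end
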